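(* $$\zeta(3) = 14 \sum_{n=1}^{\infty} \frac{1}{n^3 \sinh(\pi n)} - \frac{11}{2} \sum_{n=1}^{\infty} \frac{1}{n^3(e^{2\pi n} - 1)} - \frac{7}{2} \sum_{n=1}^{\infty} \frac{1}{n^3(e^{2\pi n} + 1)}.$$
   Context: $\zeta$ denotes the Riemann zeta function, $\zeta(s)=\sum_{n\ge1} n^{-s}$ for $\operatorname{Re} s>1$. *)

theory Defs
  imports Complex_Main
begin

definition zeta_real :: "real \<Rightarrow> real" where
  "zeta_real s = (\<Sum>n. 1 / (real (Suc n)) powr s)"

end

theory Submission
  imports Defs "HOL-Analysis.Analysis" "HOL-Real_Asymp.Real_Asymp"
begin
lemma sin_i_of_real: "sin (\<i> * complex_of_real y) = \<i> * complex_of_real (sinh y)"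
  by (simp only: sin_i_times sinh_def exp_minus) (simp add: inverse_eq_divide exp_of_real)

lemma sinh_product:
  fixes x :: real assumes "x \<noteq> 0"
  shows "(\<lambda>n. \<Prod>k=1..n. 1 + x^2 / (real k)^2) \<longlonglongrightarrow> sinh (pi*x) / (pi*x)"
proof -
  have "(\<lambda>n. of_real pi * (\<i> * of_real x) * (\<Prod>k=1..n. 1 - (\<i> * of_real x)^2 / of_nat k^2))
        \<longlonglongrightarrow> sin (of_real pi * (\<i> * of_real x))"
    by (rule sin_product_formula_complex)
  hence "(\<lambda>n. (-\<i> / of_real (pi*x)) * (of_real pi * (\<i> * of_real x) * (\<Prod>k=1..n. 1 - (\<i> * of_real x)^2 / of_nat k^2)))
        \<longlonglongrightarrow> (-\<i> / of_real (pi*x)) * sin (of_real pi * (\<i> * of_real x))"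
    by (rule tendsto_mult_left)
  also have "(\<lambda>n. (-\<i> / of_real (pi*x)) * (of_real pi * (\<i> * of_real x) * (\<Prod>k=1..n. 1 - (\<i> * of_real x)^2 / of_nat k^2)))
     = (\<lambda>n. complex_of_real (\<Prod>k=1..n. 1 + x^2 / (real k)^2))"
    using assms by (auto simp: power_mult_distrib field_simps)
  also have "(-\<i> / of_real (pi*x)) * sin (of_real pi * (\<i> * of_real x)) = complex_of_real (sinh (pi*x) / (pi*x))"
  proof -
    have "sin (of_real pi * (\<i> * of_real x)) = sin (\<i> * of_real (pi * x))" by (simp add: mult_ac)
    also have "\<dots> = \<i> * of_real (sinh (pi*x))"
      by (rule sin_i_of_real)
    finally show ?thesis using assms by (simp add: field_simps)
  qed
  finally show ?thesis by (simp only: tendsto_of_real_iff)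
qed

lemma der_ln1: "((\<lambda>t. ln (1 + t^2 / c)) has_field_derivative 2*t/(t^2+c)) (at t within S)" if "c > (0::real)"
proof -
  have pos: "1 + t^2 / c > 0" using that by (intro add_pos_nonneg) auto
  have "((\<lambda>t. ln (1 + t^2 / c)) has_field_derivative (1/(1 + t^2/c)) * (2*t/c)) (at t within S)"
    by (rule DERIV_chain2[where f=ln] DERIV_ln_divide pos)+ (use that in \<open>auto intro!: derivative_eq_intros\<close>)
  also have "(1/(1 + t^2/c)) * (2*t/c) = 2*t/(t^2+c)" using that pos by (simp add: field_simps)
  finally show ?thesis .
qed

lemma der_lnsinh: "((\<lambda>t. ln (sinh (pi*t)) - ln (pi * t)) has_field_derivative (pi * cosh (pi*x) / sinh (pi*x) - 1/x)) (at x)" if x: "x > 0"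
proof -
  have s: "sinh (pi*x) > 0" using x by (simp add: sinh_real_pos_iff)
  have "((\<lambda>t. ln (sinh (pi*t)) - ln (pi * t)) has_field_derivative (1/sinh(pi*x) * (cosh (pi*x) * pi) - 1/(pi*x) * pi)) (at x)"
    by (rule derivative_eq_intros refl | use s x in simp)+
  also have "1/sinh(pi*x) * (cosh (pi*x) * pi) - 1/(pi*x) * pi = pi * cosh (pi*x) / sinh (pi*x) - 1/x"
    using s x by (simp add: field_simps)
  finally show ?thesis .
qed

lemma ln_sinh_sums:
  fixes t :: real assumes "t > 0"
  shows "(\<lambda>i. ln (1 + t^2 / (real (Suc i))^2)) sums ln (sinh (pi*t) / (pi*t))"
proof -
  have pos: "1 + t^2 / (real (Suc i))^2 > 0" for i by (intro add_pos_nonneg) auto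
  have pr: "(\<Prod>k=1..n. g k) = (\<Prod>i<n. (g (Suc i)::real))" for g n
    by (induction n) auto
  have "(\<lambda>n. ln (\<Prod>k=1..n. 1 + t^2 / (real k)^2)) \<longlonglongrightarrow> ln (sinh (pi*t) / (pi*t))"
  proof (rule tendsto_ln)
    show "(\<lambda>n. \<Prod>k=1..n. 1 + t^2 / (real k)^2) \<longlonglongrightarrow> sinh (pi*t) / (pi*t)"
      using assms by (intro sinh_product) auto
    have "sinh (pi*t) > 0" using assms by (simp add: sinh_real_pos_iff)
    thus "sinh (pi*t) / (pi*t) \<noteq> 0" using assms by simp
  qed
  also have "(\<lambda>n. ln (\<Prod>k=1..n. 1 + t^2 / (real k)^2)) = (\<lambda>n. \<Sum>i<n. ln (1 + t^2 / (real (Suc i))^2))"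
  proof
    fix n
    have "ln (\<Prod>k=1..n. 1 + t^2 / (real k)^2) = ln (\<Prod>i<n. 1 + t^2 / (real (Suc i))^2)"
      by (subst pr) simp
    also have "\<dots> = (\<Sum>i<n. ln (1 + t^2 / (real (Suc i))^2))"
      using pos[THEN less_imp_neq, THEN not_sym] by (intro ln_prod) auto
    finally show "ln (\<Prod>k=1..n. 1 + t^2 / (real k)^2) = (\<Sum>i<n. ln (1 + t^2 / (real (Suc i))^2))" .
  qed
  finally show ?thesis by (simp add: sums_def)
qed

lemma coth_pfd:
  fixes x :: real assumes x: "x > 0"
  shows "(\<lambda>i. 2*x / (x^2 + (real (Suc i))^2)) sums (pi * cosh (pi*x) / sinh (pi*x) - 1/x)"
proof -
  define S where "S = {0<..<x+1}"
  define f where "f i t = ln (1 + t^2 / (real (Suc i))^2)" for i t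
  define f' where "f' i t = 2*t / (t^2 + (real (Suc i))^2)" for i t
  have cS: "convex S" "open S" unfolding S_def by auto
  have xS: "x \<in> S" "x \<in> interior S" using x cS by (auto simp: S_def interior_open)
  have der: "(f n has_field_derivative f' n t) (at t within S)" if "t \<in> S" for n t
  proof -
    show ?thesis unfolding f_def f'_def by (rule der_ln1) simp
  qed
  have unif: "uniformly_convergent_on S (\<lambda>n t. \<Sum>i<n. f' i t)"
  proof (rule Weierstrass_m_test')
    fix n t assume t: "t \<in> S"
    have "norm (f' n t) = 2*t / (t^2 + (real (Suc n))^2)"
      using t by (simp add: f'_def S_def)
    also have "\<dots> \<le> 2*(x+1) / (real (Suc n))^2"
      using t by (intro frac_le) (auto simp: S_def)
    finally show "norm (f' n t) \<le> 2*(x+1) / (real (Suc n))^2" .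
  next
    show "summable (\<lambda>n. 2*(x+1) / (real (Suc n))^2)"
      using inverse_power_summable[of 2, where 'a=real] 
      by (subst summable_Suc_iff) (auto intro!: summable_mult simp: divide_inverse)
  qed
  have sm: "summable (\<lambda>n. f n x)" using ln_sinh_sums[OF x] by (auto simp: f_def sums_iff)
  have D1: "((\<lambda>t. \<Sum>n. f n t) has_field_derivative (\<Sum>n. f' n x)) (at x)"
    by (rule has_field_derivative_series'(2)[OF cS(1) der unif xS(1) sm xS(2)])
  have ev: "\<forall>\<^sub>F t in nhds x. (\<Sum>n. f n t) = ln (sinh (pi*t)) - ln (pi * t)"
  proof -
    have "\<forall>\<^sub>F t in nhds x. t > 0" using eventually_nhds_in_open[of "{0<..}" x] x by simp
    thus ?thesis
    proof eventually_elim
      case (elim t)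
      have "sinh (pi*t) > 0" using elim by (simp add: sinh_real_pos_iff)
      then show ?case using ln_sinh_sums[OF elim] elim by (simp add: f_def sums_iff ln_div)
    qed
  qed
  have D2: "((\<lambda>t. ln (sinh (pi*t)) - ln (pi * t)) has_field_derivative (pi * cosh (pi*x) / sinh (pi*x) - 1/x)) (at x)"
    using der_lnsinh[OF x] .
  have D1': "((\<lambda>t. ln (sinh (pi*t)) - ln (pi * t)) has_field_derivative (\<Sum>n. f' n x)) (at x)"
    using D1 ev by (subst (asm) DERIV_cong_ev[OF refl ev refl])
  have eq: "(\<Sum>n. f' n x) = pi * cosh (pi*x) / sinh (pi*x) - 1/x"
    using DERIV_unique[OF D1' D2] .
  have "summable (\<lambda>n. f' n x)"
  proof (rule summable_comparison_test')
    show "summable (\<lambda>n. 2*x / (real (Suc n))^2)"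
      using inverse_power_summable[of 2, where 'a=real] 
      by (subst summable_Suc_iff) (auto intro!: summable_mult simp: divide_inverse)
    show "norm (f' n x) \<le> 2*x / (real (Suc n))^2" for n
      using x by (auto simp: f'_def intro!: frac_le)
  qed
  then show ?thesis using eq by (simp add: sums_iff f'_def)
qed

definition cth :: "real \<Rightarrow> real" where "cth y = (exp (2*y) + 1) / (exp (2*y) - 1)"

lemma cth_aux: "(u::real) > 1 \<Longrightarrow> (u + inverse u) / 2 / ((u - inverse u) / 2) = (u*u + 1) / (u*u - 1)"
proof -
  assume u: "u > 1"
  have "u*u > 1*1" using u by (intro mult_strict_mono) auto
  hence "u*u - 1 \<noteq> 0" by simp
  thus ?thesis using u by (simp add: field_simps)
qed

lemma cth_eq: "y > 0 \<Longrightarrow> cosh y / sinh y = cth y"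
proof -
  assume y: "y > 0"
  have "exp (2*y) = exp y * exp y" by (simp flip: exp_add)
  moreover have "exp y > 1" using y by simp
  ultimately show ?thesis unfolding cth_def cosh_def sinh_def exp_minus
    using cth_aux[of "exp y"] by simp
qed

lemma coth_y:
  fixes y :: real assumes y: "y > 0"
  shows "(\<lambda>m. 2*y / (y^2 + pi^2 * (real (Suc m))^2)) sums (cth y - 1/y)"
proof -
  have "(\<lambda>i. 2*(y/pi) / ((y/pi)^2 + (real (Suc i))^2)) sums (pi * cosh (pi*(y/pi)) / sinh (pi*(y/pi)) - 1/(y/pi))"
    using y by (intro coth_pfd) auto
  hence "(\<lambda>i. 2*(y/pi) / ((y/pi)^2 + (real (Suc i))^2) / pi) sums ((pi * cosh (pi*(y/pi)) / sinh (pi*(y/pi)) - 1/(y/pi)) / pi)"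
    by (rule sums_divide)
  also have "(\<lambda>i. 2*(y/pi) / ((y/pi)^2 + (real (Suc i))^2) / pi) = (\<lambda>m. 2*y / (y^2 + pi^2 * (real (Suc m))^2))"
  proof
    fix i
    define D where "D = (y/pi)^2 + (real (Suc i))^2"
    have D: "D > 0" unfolding D_def by (intro add_nonneg_pos) auto
    have e: "y^2 + pi^2 * (real (Suc i))^2 = pi^2 * D" unfolding D_def by (simp add: field_simps power2_eq_square)
    show "2*(y/pi) / ((y/pi)^2 + (real (Suc i))^2) / pi = 2*y / (y^2 + pi^2 * (real (Suc i))^2)"
      unfolding e D_def[symmetric] using D pi_gt_zero by (simp add: field_simps power2_eq_square)
  qed
  also have "(pi * cosh (pi*(y/pi)) / sinh (pi*(y/pi)) - 1/(y/pi)) / pi = cth y - 1/y"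
    using y cth_eq[OF y] by (simp add: field_simps)
  finally show ?thesis .
qed

lemma sq_sums: "(\<lambda>n. 1 / (real (Suc n))^2) sums (pi^2/6)"
  using inverse_squares_sums by simp

lemma pow_summable: "k \<ge> 2 \<Longrightarrow> summable (\<lambda>n. 1 / (real (Suc n))^k)"
  using inverse_power_summable[of k, where 'a=real]
  by (subst summable_Suc_iff) (auto simp: divide_inverse)

definition z4 :: real where "z4 = (\<Sum>n. 1 / (real (Suc n))^4)"

lemma z4_sums: "(\<lambda>n. 1 / (real (Suc n))^4) sums z4"
  unfolding z4_def by (rule summable_sums, rule pow_summable) simp

lemma z4_val: "z4 = pi^4/90"
proof -
  define L where "L y = (\<Sum>m. 1 / ((real (Suc m))^2 * (y^2 + pi^2 * (real (Suc m))^2)))" for y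
  define g where "g t = (1/t^2) * (1/6 - (t * ((exp (2*t)+1)/(exp (2*t)-1)) - 1)/(2*t^2))" for t :: real
  have g: "(g \<longlongrightarrow> 1/90) (at_right 0)" unfolding g_def by real_asymp
  have Lsums: "(\<lambda>m. 1 / ((real (Suc m))^2 * (y^2 + pi^2 * (real (Suc m))^2))) sums (pi^2 * g y)" if y: "y > 0" for y
  proof -
    have "(\<lambda>m. (1/y^2) * (1 / (real (Suc m))^2 - (pi^2/(2*y)) * (2*y / (y^2 + pi^2 * (real (Suc m))^2))))
          sums ((1/y^2) * (pi^2/6 - (pi^2/(2*y)) * (cth y - 1/y)))"
      by (intro sums_mult sums_diff sq_sums coth_y y)
    also have "(\<lambda>m. (1/y^2) * (1 / (real (Suc m))^2 - (pi^2/(2*y)) * (2*y / (y^2 + pi^2 * (real (Suc m))^2))))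
       = (\<lambda>m. 1 / ((real (Suc m))^2 * (y^2 + pi^2 * (real (Suc m))^2)))"
    proof
      fix m
      have "y^2 + pi^2 * (real (Suc m))^2 > 0" using y by (intro add_pos_nonneg) auto
      then show "(1/y^2) * (1 / (real (Suc m))^2 - (pi^2/(2*y)) * (2*y / (y^2 + pi^2 * (real (Suc m))^2)))
         = 1 / ((real (Suc m))^2 * (y^2 + pi^2 * (real (Suc m))^2))"
        using y by (simp add: field_simps)
    qed
    also have "(1/y^2) * (pi^2/6 - (pi^2/(2*y)) * (cth y - 1/y)) = pi^2 * g y"
    proof -
      have "exp (2*y) > 1" using y by simp
      hence "exp (2*y) - 1 \<noteq> 0" by simp
      then show ?thesis using y by (simp add: g_def cth_def field_simps) algebra
    qed
    finally show ?thesis .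
  qed
  have bound: "norm (L y - z4/pi^2) \<le> y^2 * z4" if y: "y > 0" for y
  proof -
    define t where "t m = 1 / (pi^2 * (real (Suc m))^4) - 1 / ((real (Suc m))^2 * (y^2 + pi^2 * (real (Suc m))^2))" for m
    have ts: "t sums (z4/pi^2 - L y)"
      unfolding t_def L_def
      using sums_diff[OF sums_divide[OF z4_sums, of "pi^2"] summable_sums[OF sums_summable[OF Lsums[OF y]]]]
      by (simp add: field_simps)
    have tb: "t m \<ge> 0 \<and> t m \<le> y^2 * (1 / (real (Suc m))^4)" for m
    proof -
      define M where "M = real (Suc m)"
      have M: "M \<ge> 1" by (simp add: M_def)
      have X: "y^2 + pi^2 * M^2 > 0" using y by (intro add_pos_nonneg) auto
      have "t m = y^2 / (pi^2 * M^4 * (y^2 + pi^2 * M^2))"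
      proof -
        define Y where "Y = y^2 + pi^2 * M^2"
        have Y: "Y \<noteq> 0" using X by (simp add: Y_def)
        have M0: "M \<noteq> 0" using M by auto
        have "t m = 1/(pi^2*M^4) - 1/(M^2*Y)" unfolding t_def M_def[symmetric] Y_def ..
        also have "\<dots> = (1*(M^2*Y) - 1*(pi^2*M^4)) / ((pi^2*M^4)*(M^2*Y))"
          using Y M0 by (intro diff_frac_eq) auto
        also have "1*(M^2*Y) - 1*(pi^2*M^4) = M^2 * y^2" unfolding Y_def by algebra
        also have "M^2 * y^2 / ((pi^2*M^4)*(M^2*Y)) = y^2 / (pi^2*M^4*Y)"
          using M0 Y by simp
        finally show ?thesis by (simp add: Y_def)
      qed
      moreover have "pi^2 * (y^2 + pi^2 * M^2) \<ge> 1"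
      proof -
        have "pi^2 * (y^2 + pi^2 * M^2) \<ge> pi^2 * (pi^2 * M^2)" by (intro mult_left_mono) auto
        moreover have "pi^2 * (pi^2 * M^2) \<ge> 1 * (1 * 1)"
        proof -
          have p1: "1 \<le> pi^2" using pi_gt3 by (intro one_le_power) auto
          have m1: "1 \<le> M^2" using M by (intro one_le_power) auto
          show ?thesis using p1 m1 by (intro mult_mono) auto
        qed
        ultimately show ?thesis by simp
      qed
      ultimately have "t m = (y^2 / M^4) / (pi^2 * (y^2 + pi^2 * M^2))" by (simp add: field_simps)
      moreover have "(y^2 / M^4) / (pi^2 * (y^2 + pi^2 * M^2)) \<le> (y^2 / M^4) / 1"
        using \<open>pi^2 * (y^2 + pi^2 * M^2) \<ge> 1\<close> M by (intro divide_left_mono) auto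
      moreover have "(y^2 / M^4) / (pi^2 * (y^2 + pi^2 * M^2)) \<ge> 0" using X by auto
      ultimately show ?thesis by (simp add: M_def)
    qed
    have "z4/pi^2 - L y \<ge> 0" using sums_le[OF _ sums_zero ts] tb by blast
    moreover have "z4/pi^2 - L y \<le> y^2 * z4"
      using sums_le[OF _ ts sums_mult[OF z4_sums, of "y^2"]] tb by blast
    ultimately show ?thesis by simp
  qed
  have L1: "(L \<longlongrightarrow> z4/pi^2) (at_right 0)"
  proof -
    have "((\<lambda>y. L y - z4/pi^2) \<longlongrightarrow> 0) (at_right 0)"
    proof (rule Lim_null_comparison)
      show "\<forall>\<^sub>F y in at_right 0. norm (L y - z4/pi^2) \<le> y^2 * z4"
        using bound by (auto simp: eventually_at_right_less intro: eventually_mono[OF eventually_at_right_less])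
      show "((\<lambda>y::real. y^2 * z4) \<longlongrightarrow> 0) (at_right 0)"
        by (auto intro!: tendsto_eq_intros)
    qed
    thus ?thesis by (simp add: LIM_zero_iff)
  qed
  have L2: "(L \<longlongrightarrow> pi^2 * (1/90)) (at_right 0)"
  proof (rule Lim_transform_eventually)
    show "((\<lambda>y. pi^2 * g y) \<longlongrightarrow> pi^2 * (1/90)) (at_right 0)" by (intro tendsto_mult g tendsto_const)
    show "\<forall>\<^sub>F y in at_right 0. pi^2 * g y = L y"
      using eventually_at_right_less[of 0] by eventually_elim (use Lsums in \<open>auto simp: L_def sums_iff\<close>)
  qed
  have "z4/pi^2 = pi^2 * (1/90)" using tendsto_unique[OF _ L1 L2] by simp
  thus ?thesis by (simp add: field_simps power2_eq_square power4_eq_xxxx)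
qed

definition aa :: "real \<Rightarrow> nat \<Rightarrow> nat \<Rightarrow> real" where
  "aa a k m = 2 / ((real (Suc k))^2 * (a^2 * (real (Suc k))^2 + pi^2 * (real (Suc m))^2))"
definition bb :: "nat \<Rightarrow> nat \<Rightarrow> real" where
  "bb k m = 2 / (pi^2 * (real (Suc k))^2 * (real (Suc m))^2)"
definition hh :: "real \<Rightarrow> nat \<Rightarrow> real" where
  "hh a k = (cth (a * real (Suc k)) - 1 / (a * real (Suc k))) / (a * (real (Suc k))^3)"
definition GG :: "real \<Rightarrow> real" where
  "GG a = infsum (\<lambda>(k,m). aa a k m) (UNIV \<times> UNIV)"

lemma bb_has_sum: "((\<lambda>(k,m). bb k m) has_sum pi^2/18) (UNIV \<times> UNIV)"
proof -
  have inner: "((\<lambda>m. bb k m) has_sum (2/(pi^2 * (real (Suc k))^2)) * (pi^2/6)) UNIV" for k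
  proof -
    have "(\<lambda>m. (2/(pi^2 * (real (Suc k))^2)) * (1 / (real (Suc m))^2)) sums ((2/(pi^2 * (real (Suc k))^2)) * (pi^2/6))"
      by (intro sums_mult sq_sums)
    hence "(\<lambda>m. bb k m) sums ((2/(pi^2 * (real (Suc k))^2)) * (pi^2/6))"
      by (simp add: bb_def field_simps)
    thus ?thesis by (rule sums_nonneg_imp_has_sum) (simp add: bb_def)
  qed
  have outer: "((\<lambda>k. (2/(pi^2 * (real (Suc k))^2)) * (pi^2/6)) has_sum pi^2/18) UNIV"
  proof -
    have "(\<lambda>k. (1/3) * (1 / (real (Suc k))^2)) sums ((1/3) * (pi^2/6))"
      by (intro sums_mult sq_sums)
    hence "(\<lambda>k. (2/(pi^2 * (real (Suc k))^2)) * (pi^2/6)) sums (pi^2/18)"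
      by (simp add: field_simps)
    thus ?thesis by (rule sums_nonneg_imp_has_sum) simp
  qed
  have summ: "(\<lambda>(k,m). bb k m) summable_on (UNIV \<times> UNIV)"
    by (rule summable_on_SigmaI[OF _ has_sum_imp_summable[OF outer]]) (use inner in \<open>auto simp: bb_def\<close>)
  show ?thesis
    by (rule has_sum_SigmaI[OF _ outer summ]) (use inner in auto)
qed

lemma aa_inner: "a > 0 \<Longrightarrow> ((\<lambda>m. aa a k m) has_sum hh a k) UNIV"
proof -
  assume a: "a > 0"
  define K where "K = real (Suc k)"
  have K: "K > 0" by (simp add: K_def)
  have "(\<lambda>m. (1/(a*K^3)) * (2*(a*K) / ((a*K)^2 + pi^2 * (real (Suc m))^2))) sums ((1/(a*K^3)) * (cth (a*K) - 1/(a*K)))"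
    using a K by (intro sums_mult coth_y) auto
  also have "(\<lambda>m. (1/(a*K^3)) * (2*(a*K) / ((a*K)^2 + pi^2 * (real (Suc m))^2))) = (\<lambda>m. aa a k m)"
  proof
    fix m
    have "(a*K)^2 + pi^2 * (real (Suc m))^2 > 0" by (intro add_nonneg_pos) auto
    then show "(1/(a*K^3)) * (2*(a*K) / ((a*K)^2 + pi^2 * (real (Suc m))^2)) = aa a k m"
      using a K unfolding aa_def K_def[symmetric] by (simp add: field_simps power2_eq_square power3_eq_cube)
  qed
  also have "(1/(a*K^3)) * (cth (a*K) - 1/(a*K)) = hh a k" by (simp add: hh_def K_def)
  finally show ?thesis by (rule sums_nonneg_imp_has_sum) (use a in \<open>simp add: aa_def\<close>)
qed

lemma aa_le_bb: "a > 0 \<Longrightarrow> aa a k m \<le> bb k m"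
proof -
  assume a: "a > 0"
  define K where "K = real (Suc k)"
  define M where "M = real (Suc m)"
  have K: "K > 0" and M: "M > 0" by (auto simp: K_def M_def)
  have "K^2 * (pi^2 * M^2) \<le> K^2 * (a^2 * K^2 + pi^2 * M^2)"
    by (intro mult_left_mono) auto
  moreover have "K^2 * (pi^2 * M^2) > 0" using K M by auto
  ultimately have "2 / (K^2 * (a^2 * K^2 + pi^2 * M^2)) \<le> 2 / (K^2 * (pi^2 * M^2))"
    by (intro divide_left_mono) auto
  moreover have "aa a k m = 2 / (K^2 * (a^2 * K^2 + pi^2 * M^2))" by (simp only: aa_def K_def M_def)
  moreover have "bb k m = 2 / (K^2 * (pi^2 * M^2))"
  proof -
    have "bb k m = 2 / (pi^2 * K^2 * M^2)" by (simp only: bb_def K_def M_def)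
    thus ?thesis by (simp add: mult_ac)
  qed
  ultimately show ?thesis by simp
qed

lemma aa_summable: "a > 0 \<Longrightarrow> (\<lambda>(k,m). aa a k m) summable_on (UNIV \<times> UNIV)"
proof (rule summable_on_comparison_test[OF has_sum_imp_summable[OF bb_has_sum]])
  assume a: "a > 0"
  fix x :: "nat \<times> nat"
  show "(case x of (k,m) \<Rightarrow> aa a k m) \<le> (case x of (k,m) \<Rightarrow> bb k m)"
    using aa_le_bb[OF a] by (cases x) simp
  show "0 \<le> (case x of (k,m) \<Rightarrow> aa a k m)"
    by (cases x) (simp add: aa_def)
qed

lemma GG_has_sum: "a > 0 \<Longrightarrow> ((\<lambda>(k,m). aa a k m) has_sum GG a) (UNIV \<times> UNIV)"
  unfolding GG_def by (rule has_sum_infsum aa_summable)+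

lemma hh_has_sum: "a > 0 \<Longrightarrow> (hh a has_sum GG a) UNIV"
  by (rule has_sum_Sigma'[OF GG_has_sum]) (auto intro: aa_inner)

lemma GG_sym:
  assumes a: "a > 0" and b: "b > 0" and ab: "a * b = pi^2"
  shows "GG a + GG b = pi^2/18"
proof -
  have 1: "((\<lambda>(k,m). aa b m k) has_sum GG b) (UNIV \<times> UNIV)"
    using GG_has_sum[OF b] by (subst (asm) has_sum_swap) simp
  have 2: "((\<lambda>x. (\<lambda>(k,m). aa a k m) x + (\<lambda>(k,m). aa b m k) x) has_sum (GG a + GG b)) (UNIV \<times> UNIV)"
    by (rule has_sum_add[OF GG_has_sum[OF a] 1])
  have eq: "aa a k m + aa b m k = bb k m" for k m
  proof -
    define K where "K = real (Suc k)"
    define M where "M = real (Suc m)"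
    have K: "K > 0" and M: "M > 0" by (auto simp: K_def M_def)
    have bdef: "b = pi^2 / a" using ab a by (simp add: field_simps)
    have X: "a^2 * K^2 + pi^2 * M^2 > 0" using K M a by (intro add_pos_pos) auto
    have Y: "b^2 * M^2 + pi^2 * K^2 > 0" using K M b by (intro add_pos_pos) auto
    have Yeq: "b^2 * M^2 + pi^2 * K^2 = (pi^2 / a^2) * (a^2 * K^2 + pi^2 * M^2)"
      using a by (simp add: bdef field_simps power2_eq_square)
    have "aa a k m + aa b m k = 2 / (K^2 * (a^2 * K^2 + pi^2 * M^2)) + 2 / (M^2 * ((pi^2 / a^2) * (a^2 * K^2 + pi^2 * M^2)))"
      by (simp only: aa_def K_def[symmetric] M_def[symmetric] Yeq)
    also have "\<dots> = 2 / (pi^2 * K^2 * M^2)"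
    proof -
      define X where "X = a^2 * K^2 + pi^2 * M^2"
      have X0: "X \<noteq> 0" using X by (simp add: X_def)
      have "2 / (K^2 * X) + 2 / (M^2 * ((pi^2 / a^2) * X)) = 2 * (pi^2 * M^2 + a^2 * K^2) / (pi^2 * K^2 * M^2 * X)"
        using a K M X0 by (simp add: field_simps)
      also have "pi^2 * M^2 + a^2 * K^2 = X" by (simp add: X_def)
      also have "2 * X / (pi^2 * K^2 * M^2 * X) = 2 / (pi^2 * K^2 * M^2)"
        using X0 by simp
      finally show ?thesis by (simp only: X_def)
    qed
    finally show ?thesis by (simp add: bb_def K_def M_def)
  qed
  have "((\<lambda>(k,m). bb k m) has_sum (GG a + GG b)) (UNIV \<times> UNIV)"
    using 2 by (simp add: eq case_prod_unfold)
  thus ?thesis using bb_has_sum has_sum_unique by blast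
qed


definition z3 :: real where "z3 = (\<Sum>n. 1 / (real (Suc n))^3)"

lemma z3_sums: "(\<lambda>n. 1 / (real (Suc n))^3) sums z3"
  unfolding z3_def by (rule summable_sums, rule pow_summable) simp

definition EE :: "real \<Rightarrow> real" where
  "EE c = (\<Sum>n. 1 / (real (Suc n) ^ 3 * (exp (c * real (Suc n)) - 1)))"

lemma EE_sums: "c > 0 \<Longrightarrow> (\<lambda>n. 1 / (real (Suc n) ^ 3 * (exp (c * real (Suc n)) - 1))) sums EE c"
proof -
  assume c: "c > 0"
  have "summable (\<lambda>n. 1 / (real (Suc n) ^ 3 * (exp (c * real (Suc n)) - 1)))"
  proof (rule summable_comparison_test')
    show "summable (\<lambda>n. (1/c) * (1 / (real (Suc n))^4))"
      by (intro summable_mult pow_summable) simp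
    fix n
    define N where "N = real (Suc n)"
    have N: "N > 0" by (simp add: N_def)
    have "exp (c*N) - 1 \<ge> c * N" using exp_ge_add_one_self[of "c*N"] by linarith
    moreover have "c * N > 0" using c N by simp
    ultimately have le1: "1 / (N^3 * (exp (c*N) - 1)) \<le> 1 / (N^3 * (c*N))"
      using N c by (intro divide_left_mono mult_left_mono mult_pos_pos) auto
    have b0: "1 / (N^3 * (exp (c*N) - 1)) \<ge> 0" using \<open>exp (c*N) - 1 \<ge> c * N\<close> \<open>c*N>0\<close> N by simp
    have eq: "1 / (N^3 * (c*N)) = (1/c) * (1/N^4)" by (simp add: field_simps power4_eq_xxxx power3_eq_cube)
    have "norm (1 / (N^3 * (exp (c*N) - 1))) \<le> (1/c) * (1/N^4)"
      using le1 b0 eq by simp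
    then show "norm (1 / (real (Suc n) ^ 3 * (exp (c * real (Suc n)) - 1))) \<le> (1/c) * (1 / (real (Suc n))^4)"
      by (simp only: N_def)
  qed
  thus ?thesis by (simp add: EE_def summable_sums)
qed

lemma Csum: "a > 0 \<Longrightarrow> (\<lambda>k. cth (a * real (Suc k)) / (real (Suc k))^3) sums (a * GG a + z4 / a)"
proof -
  assume a: "a > 0"
  have "(\<lambda>k. a * hh a k + (1/a) * (1 / (real (Suc k))^4)) sums (a * GG a + (1/a) * z4)"
    by (intro sums_add sums_mult has_sum_imp_sums hh_has_sum a z4_sums)
  also have "(\<lambda>k. a * hh a k + (1/a) * (1 / (real (Suc k))^4)) = (\<lambda>k. cth (a * real (Suc k)) / (real (Suc k))^3)"
  proof
    fix k
    define K where "K = real (Suc k)"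
    have K: "K > 0" by (simp add: K_def)
    show "a * hh a k + (1/a) * (1 / (real (Suc k))^4) = cth (a * real (Suc k)) / (real (Suc k))^3"
      unfolding hh_def K_def[symmetric] using a K by (simp add: field_simps power4_eq_xxxx power3_eq_cube)
  qed
  finally show ?thesis by simp
qed

lemma Csum2: "a > 0 \<Longrightarrow> (\<lambda>k. cth (a * real (Suc k)) / (real (Suc k))^3) sums (z3 + 2 * EE (2*a))"
proof -
  assume a: "a > 0"
  have "(\<lambda>k. 1 / (real (Suc k))^3 + 2 * (1 / (real (Suc k) ^ 3 * (exp ((2*a) * real (Suc k)) - 1)))) sums (z3 + 2 * EE (2*a))"
    using a by (intro sums_add sums_mult z3_sums EE_sums) auto
  also have "(\<lambda>k. 1 / (real (Suc k))^3 + 2 * (1 / (real (Suc k) ^ 3 * (exp ((2*a) * real (Suc k)) - 1)))) = (\<lambda>k. cth (a * real (Suc k)) / (real (Suc k))^3)"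
  proof
    fix k
    define K where "K = real (Suc k)"
    have K: "K > 0" by (simp add: K_def)
    have "2*(a*K) > 0" using a K by simp
    hence "exp (2*(a*K)) > 1" by simp
    hence e: "exp (2*(a*K)) - 1 \<noteq> 0" by linarith
    show "1 / (real (Suc k))^3 + 2 * (1 / (real (Suc k) ^ 3 * (exp ((2*a) * real (Suc k)) - 1))) = cth (a * real (Suc k)) / (real (Suc k))^3"
      unfolding K_def[symmetric] cth_def using a K e by (simp add: field_simps mult.assoc)
  qed
  finally show ?thesis .
qed

lemma rel: "a > 0 \<Longrightarrow> a * GG a + z4 / a = z3 + 2 * EE (2*a)"
  using sums_unique2[OF Csum Csum2] .


lemma aux1: "u > 1 \<Longrightarrow> N > 0 \<Longrightarrow> 1 / (N^3 * ((u - inverse u) / 2)) = 2 * (1 / (N^3 * (u - 1))) - 2 * (1 / (N^3 * (u*u - 1)))"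
  for u N :: real
proof -
  assume u: "u > 1" and N: "N > 0"
  have r: "\<And>X. 1/(N^3*X) = (1/N^3)*(1/X)" by simp
  have d: "u*u - 1 = (u-1)*(u+1)" by algebra
  have a: "u - 1 \<noteq> 0" "u + 1 \<noteq> 0" "u \<noteq> 0" using u by auto
  have "u*u > 1*1" using u by (intro mult_strict_mono) auto
  hence a2: "u*u - 1 \<noteq> 0" by simp
  have s: "(u - inverse u) / 2 = ((u-1)*(u+1)) / (2*u)" using a by (simp add: field_simps)
  have k: "1 / (((u-1)*(u+1)) / (2*u)) = 2 * (1/(u-1)) - 2 * (1/((u-1)*(u+1)))"
  proof -
    have h: "(2*(u+1)) / ((u-1)*(u+1)) = 2 / (u-1)" by (rule mult_divide_mult_cancel_right[OF a(2)])
    have "2 * (1/(u-1)) - 2 * (1/((u-1)*(u+1))) = (2*(u+1)) / ((u-1)*(u+1)) - 2 / ((u-1)*(u+1))"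
      unfolding h by simp
    also have "\<dots> = (2*(u+1) - 2) / ((u-1)*(u+1))" by (rule diff_divide_distrib[symmetric])
    also have "2*(u+1) - 2 = 2*u" by simp
    also have "(2*u) / ((u-1)*(u+1)) = 1 / (((u-1)*(u+1)) / (2*u))" by simp
    finally show ?thesis ..
  qed
  show ?thesis unfolding r s d k by (simp add: algebra_simps)
qed

lemma aux2: "w > 1 \<Longrightarrow> N > 0 \<Longrightarrow> 1 / (N^3 * (w + 1)) = 1 / (N^3 * (w - 1)) - 2 * (1 / (N^3 * (w*w - 1)))"
  for w N :: real
proof -
  assume u: "w > 1" and N: "N > 0"
  have r: "\<And>X. 1/(N^3*X) = (1/N^3)*(1/X)" by simp
  have d: "w*w - 1 = (w-1)*(w+1)" by algebra
  have a: "w - 1 \<noteq> 0" "w + 1 \<noteq> 0" using u by auto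
  have "w*w > 1*1" using u by (intro mult_strict_mono) auto
  hence a2: "w*w - 1 \<noteq> 0" by simp
  have k: "1/(w+1) = 1/(w-1) - 2 * (1/((w-1)*(w+1)))"
  proof -
    have h: "(1*(w+1)) / ((w-1)*(w+1)) = 1 / (w-1)" by (rule mult_divide_mult_cancel_right[OF a(2)])
    have "1/(w-1) - 2 * (1/((w-1)*(w+1))) = (1*(w+1)) / ((w-1)*(w+1)) - 2 / ((w-1)*(w+1))"
      unfolding h by simp
    also have "\<dots> = (1*(w+1) - 2) / ((w-1)*(w+1))" by (rule diff_divide_distrib[symmetric])
    also have "1*(w+1) - 2 = w - 1" by simp
    also have "(w - 1) / ((w-1)*(w+1)) = 1/(w+1)" using a by simp
    finally show ?thesis ..
  qed
  show ?thesis unfolding r d k by (simp add: algebra_simps)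
qed

theorem mainTheorem1:
  shows "zeta_real 3 =
      14 * (\<Sum>n. 1 / (real (Suc n) ^ 3 * sinh (pi * real (Suc n))))
    - 11 / 2 * (\<Sum>n. 1 / (real (Suc n) ^ 3 * (exp (2 * pi * real (Suc n)) - 1)))
    - 7 / 2 * (\<Sum>n. 1 / (real (Suc n) ^ 3 * (exp (2 * pi * real (Suc n)) + 1)))"
proof -
  have zr: "zeta_real 3 = z3" unfolding zeta_real_def z3_def by simp
  have S1: "(\<lambda>n. 1 / (real (Suc n) ^ 3 * sinh (pi * real (Suc n)))) sums (2 * EE pi - 2 * EE (2*pi))"
  proof -
    have "(\<lambda>n. 2 * (1 / (real (Suc n) ^ 3 * (exp (pi * real (Suc n)) - 1))) - 2 * (1 / (real (Suc n) ^ 3 * (exp ((2*pi) * real (Suc n)) - 1))))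
          sums (2 * EE pi - 2 * EE (2*pi))"
      by (intro sums_diff sums_mult EE_sums) auto
    also have "(\<lambda>n. 2 * (1 / (real (Suc n) ^ 3 * (exp (pi * real (Suc n)) - 1))) - 2 * (1 / (real (Suc n) ^ 3 * (exp ((2*pi) * real (Suc n)) - 1))))
      = (\<lambda>n. 1 / (real (Suc n) ^ 3 * sinh (pi * real (Suc n))))"
    proof
      fix n
      define N where "N = real (Suc n)"
      have N: "N > 0" by (simp add: N_def)
      have e: "exp ((2*pi) * N) = exp (pi*N) * exp (pi*N)" by (simp flip: exp_add)
      have s: "sinh (pi * N) = (exp (pi*N) - inverse (exp (pi*N))) / 2" by (simp add: sinh_def exp_minus)
      have u: "exp (pi*N) > 1" using N by simp
      show "2 * (1 / (real (Suc n) ^ 3 * (exp (pi * real (Suc n)) - 1))) - 2 * (1 / (real (Suc n) ^ 3 * (exp ((2*pi) * real (Suc n)) - 1)))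
        = 1 / (real (Suc n) ^ 3 * sinh (pi * real (Suc n)))"
        unfolding N_def[symmetric] e s using aux1[OF u N] by simp
    qed
    finally show ?thesis .
  qed
  have S2: "(\<lambda>n. 1 / (real (Suc n) ^ 3 * (exp (2 * pi * real (Suc n)) - 1))) sums EE (2*pi)"
    by (rule EE_sums) simp
  have S3: "(\<lambda>n. 1 / (real (Suc n) ^ 3 * (exp (2 * pi * real (Suc n)) + 1))) sums (EE (2*pi) - 2 * EE (4*pi))"
  proof -
    have "(\<lambda>n. 1 / (real (Suc n) ^ 3 * (exp ((2*pi) * real (Suc n)) - 1)) - 2 * (1 / (real (Suc n) ^ 3 * (exp ((4*pi) * real (Suc n)) - 1))))
          sums (EE (2*pi) - 2 * EE (4*pi))"
      by (intro sums_diff sums_mult EE_sums) auto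
    also have "(\<lambda>n. 1 / (real (Suc n) ^ 3 * (exp ((2*pi) * real (Suc n)) - 1)) - 2 * (1 / (real (Suc n) ^ 3 * (exp ((4*pi) * real (Suc n)) - 1))))
      = (\<lambda>n. 1 / (real (Suc n) ^ 3 * (exp (2 * pi * real (Suc n)) + 1)))"
    proof
      fix n
      define N where "N = real (Suc n)"
      have N: "N > 0" by (simp add: N_def)
      have e: "exp ((4*pi) * N) = exp ((2*pi)*N) * exp ((2*pi)*N)" by (simp flip: exp_add)
      have u: "exp ((2*pi)*N) > 1" using N by simp
      show "1 / (real (Suc n) ^ 3 * (exp ((2*pi) * real (Suc n)) - 1)) - 2 * (1 / (real (Suc n) ^ 3 * (exp ((4*pi) * real (Suc n)) - 1)))
        = 1 / (real (Suc n) ^ 3 * (exp (2 * pi * real (Suc n)) + 1))"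
        unfolding N_def[symmetric] e using aux2[OF u N] by simp
    qed
    finally show ?thesis .
  qed
  have r1: "pi * GG pi + z4 / pi = z3 + 2 * EE (2*pi)" by (rule rel) simp
  have r2: "(pi/2) * GG (pi/2) + z4 / (pi/2) = z3 + 2 * EE pi" using rel[of "pi/2"] by simp
  have r3: "(2*pi) * GG (2*pi) + z4 / (2*pi) = z3 + 2 * EE (4*pi)" using rel[of "2*pi"] by simp
  have g1: "GG pi + GG pi = pi^2/18" by (rule GG_sym) (auto simp: power2_eq_square)
  have g2: "GG (pi/2) + GG (2*pi) = pi^2/18" by (rule GG_sym) (auto simp: power2_eq_square)
  define P where "P = pi * GG (pi/2)"
  define Q where "Q = pi^3"
  have g1': "pi * GG pi + pi * GG pi = Q/18"
    using arg_cong[OF g1, of "\<lambda>x. pi*x"] by (simp add: distrib_left Q_def power2_eq_square power3_eq_cube)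
  have g2': "pi * GG (pi/2) + pi * GG (2*pi) = Q/18"
    using arg_cong[OF g2, of "\<lambda>x. pi*x"] by (simp add: distrib_left Q_def power2_eq_square power3_eq_cube)
  have q1: "pi * GG pi = Q / 36" using g1' by linarith
  have q2: "(2*pi) * GG (2*pi) = Q/9 - 2 * P"
  proof -
    have "(2*pi) * GG (2*pi) = 2 * (pi * GG (2*pi))" by simp
    thus ?thesis using g2' unfolding P_def by linarith
  qed
  have q3: "(pi/2) * GG (pi/2) = P / 2" by (simp add: P_def)
  have z1: "z4 / pi = Q / 90" by (simp add: z4_val Q_def field_simps power4_eq_xxxx power3_eq_cube)
  have z2: "z4 / (pi/2) = Q / 45" by (simp add: z4_val Q_def field_simps power4_eq_xxxx power3_eq_cube)
  have z5: "z4 / (2*pi) = Q / 180" by (simp add: z4_val Q_def field_simps power4_eq_xxxx power3_eq_cube)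
  have "z3 = 14 * (2 * EE pi - 2 * EE (2*pi)) - 11/2 * EE (2*pi) - 7/2 * (EE (2*pi) - 2 * EE (4*pi))"
  proof -
    have e1: "z3 + 2 * EE (2*pi) = Q/36 + Q/90" using r1 q1 z1 by simp
    have e2: "z3 + 2 * EE pi = P/2 + Q/45" using r2 q3 z2 by simp
    have e3: "z3 + 2 * EE (4*pi) = (Q/9 - 2*P) + Q/180" using r3 q2 z5 by simp
    show ?thesis using e1 e2 e3 by argo
  qed
  moreover note s1 = sums_unique[OF S1, symmetric]
  moreover note s2 = sums_unique[OF S2, symmetric]
  moreover note s3 = sums_unique[OF S3, symmetric]
  ultimately show ?thesis unfolding zr by argo
qed

end
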